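(* Let $m\ge 2$, let $C=uRM(m)$ (defined in the context) with base qubits $b_0,\dots,b_m$ and parity labels $L(q)$. For each $i\in\{0,\dots,m\}$, the logical operator $i$ of $C$, i.e. the codeword $x^{(i)}\in C$ with $x^{(i)}_{b_i}=1$ and $x^{(i)}_{b_j}=0$ for $j\ne i$ (whose support is the set of qubits $q$ with $i\in L(q)$), has weight exactly $2^{m-1}$.
   Context: Let $a=\lceil m/2\rceil$, $b=\lfloor m/2\rfloor$. Place $2^m$ bits (qubits) on a grid with $2^b$ rows and $2^a$ columns, positions $(i,j)$, row $1$ on top, column $1$ leftmost. Bulk checks: for $1\le i<2^b$, $1\le j<2^a$, the set $\{(i,j),(i+1,j),(i,j+1),(i+1,j+1)\}$. Boundary checks: for a line of $L=2^n$ positions $1,\dots,L$, each $s\in\{1,\dots,n-1\}$, $w=2^s$, and integer $t$ with $-L/(2w)+1\le t\le L/(2w)-1$, $S(w,t)=\{L/2-w/2+wt,\ L/2-w/2+wt+1,\ L/2+w/2+wt,\ L/2+w/2+wt+1\}$; these with $n=a$ on the top row ($j\mapsto(1,j)$) and with $n=b$ on the leftmost column ($i\mapsto(i,1)$). $C=uRM(m)$ is the set of $x\in\mathbb{F}_2^{2^m}$ with even sum over every check; it has dimension $m+1$. Base qubits are $m+1$ positions $b_0,\dots,b_m$ such that $x\mapsto(x_{b_0},\dots,x_{b_m})$ is a bijection $C\to\mathbb{F}_2^{m+1}$. The parity label of a qubit $q$ is the unique $L(q)\subseteq\{0,\dots,m\}$ with $x_q=\sum_{i\in L(q)}x_{b_i}$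 for all $x\in C$. *)

theory Defs
  imports Main "HOL-Library.FuncSet"
begin

definition colexp :: "nat \<Rightarrow> nat" where "colexp m = (m + 1) div 2"
definition rowexp :: "nat \<Rightarrow> nat" where "rowexp m = m div 2"

definition grid :: "nat \<Rightarrow> (nat \<times> nat) set" where
  "grid m = {1..2^rowexp m} \<times> {1..2^colexp m}"

definition bulk_checks :: "nat \<Rightarrow> (nat \<times> nat) set set" where
  "bulk_checks m = {{(i,j),(i+1,j),(i,j+1),(i+1,j+1)} | i j.
      1 \<le> i \<and> i < 2^rowexp m \<and> 1 \<le> j \<and> j < 2^colexp m}"

(* boundary checks S(w,t) on a line of L = 2^n positions *)
definition line_checks :: "nat \<Rightarrow> int set set" where
  "line_checks n = {(let L = (2::int)^n; w = (2::int)^s in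
        {L div 2 - w div 2 + w*t, L div 2 - w div 2 + w*t + 1,
         L div 2 + w div 2 + w*t, L div 2 + w div 2 + w*t + 1}) | s t.
      1 \<le> s \<and> s \<le> n - 1 \<and>
      - ((2::int)^n div (2 * 2^s)) + 1 \<le> t \<and> t \<le> (2::int)^n div (2 * 2^s) - 1}"

definition checks :: "nat \<Rightarrow> (nat \<times> nat) set set" where
  "checks m = bulk_checks m
     \<union> {(\<lambda>j. (1::nat, nat j)) ` S | S. S \<in> line_checks (colexp m)}
     \<union> {(\<lambda>i. (nat i, 1::nat)) ` S | S. S \<in> line_checks (rowexp m)}"

(* codewords as supports: x_q = 1 iff q \<in> X *)
definition uRM :: "nat \<Rightarrow> (nat \<times> nat) set set" where
  "uRM m = {X. X \<subseteq> grid m \<and> (\<forall>Q \<in> checks m. even (card (X \<inter> Q)))}"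

definition is_base :: "nat \<Rightarrow> (nat \<Rightarrow> nat \<times> nat) \<Rightarrow> bool" where
  "is_base m bq \<longleftrightarrow> bij_betw (\<lambda>X. restrict (\<lambda>k. bq k \<in> X) {0..m}) (uRM m)
                        ({0..m} \<rightarrow>\<^sub>E (UNIV :: bool set))"

end

theory Submission
  imports Defs
begin


definition dd :: "(nat \<Rightarrow> bool) \<Rightarrow> nat \<Rightarrow> bool" where
  "dd g p = (g p \<noteq> g (Suc p))"

definition QQ :: "nat \<Rightarrow> (nat \<Rightarrow> bool) \<Rightarrow> bool" where
  "QQ n g = (\<forall>v k. 2^v*(2*k+3) < (2::nat)^n \<longrightarrow> dd g (2^v*(2*k+1)) = dd g (2^v*(2*k+3)))"

lemma mono3:
  assumes "(2::nat)^v*(2*k+3) < N"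
  shows "2^v*(2*k+1) < N"
proof -
  have "(2::nat)*k+1 \<le> 2*k+3" by simp
  then have "(2::nat)^v*(2*k+1) \<le> 2^v*(2*k+3)" by (rule mult_le_mono2)
  then show ?thesis using assms by (rule le_less_trans)
qed

lemma QQ_D:
  assumes "QQ n g" "2^v*(2*k+3) < (2::nat)^n"
  shows "dd g (2^v*(2*k+1)) = dd g (2^v*(2*k+3))"
proof -
  have "\<forall>v k. 2^v*(2*k+3) < (2::nat)^n \<longrightarrow> dd g (2^v*(2*k+1)) = dd g (2^v*(2*k+3))"
    using assms(1) unfolding QQ_def .
  then have "2^v*(2*k+3) < (2::nat)^n \<longrightarrow> dd g (2^v*(2*k+1)) = dd g (2^v*(2*k+3))"
    by (elim allE)
  then show ?thesis using assms(2) by (rule mp)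
qed

lemma chain:
  assumes "QQ n g" "2^v*(2*k+1) < (2::nat)^n"
  shows "dd g (2^v*(2*k+1)) = dd g (2^v)"
  using assms(2)
proof (induction k)
  case 0 then show ?case by simp
next
  case (Suc k)
  have e: "2*Suc k+1 = 2*k+3" by simp
  have a: "2^v*(2*k+3) < (2::nat)^n" using Suc.prems by (simp only: e)
  have b: "2^v*(2*k+1) < (2::nat)^n" using a by (rule mono3)
  have c1: "dd g (2^v*(2*k+1)) = dd g (2^v*(2*k+3))" by (rule QQ_D[OF assms(1) a])
  have c2: "dd g (2^v*(2*Suc k+1)) = dd g (2^v*(2*k+3))"
    by (simp only: e)
  show ?case using c1 c2 Suc.IH[OF b] by argo
qed

lemma card_sum_filter:
  assumes "finite A"
  shows "card {j\<in>A. P j} = (\<Sum>j\<in>A. of_bool (P j) :: nat)"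
proof -
  have "card {j\<in>A. P j} = sum (\<lambda>_. 1::nat) {j\<in>A. P j}" by (rule card_eq_sum)
  also have "\<dots> = sum (\<lambda>j. if P j then 1 else 0) A" by (rule sum.inter_filter[OF assms])
  also have "\<dots> = (\<Sum>j\<in>A. of_bool (P j) :: nat)" by (simp only: of_bool_def)
  finally show ?thesis .
qed

lemma pair_sum: "(\<Sum>j<2*(N::nat). (f j::nat)) = (\<Sum>k<N. f (2*k) + f (2*k+1))"
  by (induction N) (auto simp: sum.lessThan_Suc)

lemma pair_card: "card {j\<in>{1..2*(N::nat)}. P j} = (\<Sum>k<N. of_bool (P (2*k+1)) + of_bool (P (2*k+2)) :: nat)"
proof -
  have "card {j\<in>{1..2*N}. P j} = (\<Sum>j\<in>{1..2*N}. of_bool (P j))"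
    by (rule card_sum_filter) simp
  also have "\<dots> = (\<Sum>j<2*N. of_bool (P (Suc j)))"
    by (simp only: atLeastLessThanSuc_atLeastAtMost[symmetric] sum.atLeast_Suc_lessThan_Suc_shift atLeast0LessThan One_nat_def comp_def)
  also have "\<dots> = (\<Sum>k<N. of_bool (P (2*k+1)) + of_bool (P (2*k+2)))"
    by (simp add: pair_sum)
  finally show ?thesis .
qed

definition LW :: "nat \<Rightarrow> (nat \<Rightarrow> bool) \<Rightarrow> bool" where
  "LW n g = ((\<forall>j\<in>{1..2^n}. \<not> g j) \<or> (\<forall>j\<in>{1..2^n}. g j) \<or> 2 * card {j\<in>{1..2^n}. g j} = 2^n)"

lemma line_lemma: "QQ n g \<Longrightarrow> LW n g"
proof (induction n arbitrary: g)
  case 0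
  have "{1..2^0} = {1::nat}" by simp
  then show ?case unfolding LW_def by (cases "g 1") simp_all
next
  case (Suc n)
  show ?case
  proof (cases "dd g 1")
    case True
    have odd: "g (2*k+1) \<noteq> g (2*k+2)" if "k < 2^n" for k
    proof -
      have "2^0*(2*k+1) < (2::nat)^Suc n" using that by simp
      from chain[OF Suc.prems this] True show ?thesis by (simp add: dd_def)
    qed
    have "card {j\<in>{1..2*2^n}. g j} = (\<Sum>k<2^n. of_bool (g (2*k+1)) + of_bool (g (2*k+2)))"
      by (rule pair_card[of "2^n" g])
    also have "\<dots> = (\<Sum>k<(2::nat)^n. 1)"
    proof (rule sum.cong[OF refl])
      fix k assume "k \<in> {..<(2::nat)^n}"
      then have "g (2*k+1) \<noteq> g (2*k+2)" using odd by simp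
      then show "of_bool (g (2*k+1)) + of_bool (g (2*k+2)) = (1::nat)" by (cases "g (2*k+1)") simp_all
    qed
    also have "\<dots> = 2^n" by simp
    finally have c: "card {j\<in>{1..2^Suc n}. g j} = 2^n" by (simp only: power_Suc)
    show ?thesis unfolding LW_def using c by simp
  next
    case False
    have ev: "g (2*k+1) = g (2*k+2)" if "k < 2^n" for k
    proof -
      have "2^0*(2*k+1) < (2::nat)^Suc n" using that by simp
      from chain[OF Suc.prems this] False show ?thesis by (simp add: dd_def)
    qed
    define h where "h k = g (2*k)" for k
    have ddh: "dd h p = dd g (2*p)" if "1 \<le> p" "p < 2^n" for p
    proof -
      have "p = Suc (p - 1)" using that(1) by simp
      then obtain k where "p = Suc k" by blast
      with ev[of p] that show ?thesis unfolding dd_def h_def by simp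
    qed
    have "QQ n h" unfolding QQ_def
    proof (intro allI impI)
      fix v k assume a: "2^v*(2*k+3) < (2::nat)^n"
      have b: "2^v*(2*k+1) < (2::nat)^n" using a by (rule mono3)
      have "2^(Suc v)*(2*k+3) < (2::nat)^Suc n" using a by simp
      then have "dd g (2^(Suc v)*(2*k+1)) = dd g (2^(Suc v)*(2*k+3))" by (rule QQ_D[OF Suc.prems])
      moreover have "1 \<le> 2^v*(2*k+1)" "1 \<le> 2^v*(2*k+3)" by (simp_all add: Suc_le_eq)
      ultimately show "dd h (2^v*(2*k+1)) = dd h (2^v*(2*k+3))"
        using ddh a b by (simp add: mult.assoc)
    qed
    from Suc.IH[OF this] have IH: "LW n h" .
    have gh1: "g (2*k+1) = h (Suc k)" "g (2*k+2) = h (Suc k)" if "k < 2^n" for k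
      using ev[OF that] by (simp_all add: h_def)
    have allj: "\<exists>k<2^n. j = 2*k+1 \<or> j = 2*k+2" if "j \<in> {1..2^Suc n}" for j :: nat
    proof -
      have "j = 2*((j-1) div 2) + 1 \<or> j = 2*((j-1) div 2)+2" using that by auto
      moreover have "(j-1) div 2 < 2^n" using that by auto
      ultimately show ?thesis by blast
    qed
    have "card {j\<in>{1..2*2^n}. g j} = (\<Sum>k<2^n. of_bool (g (2*k+1)) + of_bool (g (2*k+2)))"
      by (rule pair_card[of "2^n" g])
    also have "\<dots> = (\<Sum>k<(2::nat)^n. 2 * of_bool (h (Suc k)))"
      by (rule sum.cong) (use gh1 in auto)
    also have "\<dots> = 2 * (\<Sum>k<(2::nat)^n. of_bool (h (Suc k)))"
      by (simp add: sum_distrib_left)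
    also have "(\<Sum>k<(2::nat)^n. of_bool (h (Suc k))) = (\<Sum>j\<in>{1..2^n}. of_bool (h j))"
      by (simp only: atLeastLessThanSuc_atLeastAtMost[symmetric] sum.atLeast_Suc_lessThan_Suc_shift atLeast0LessThan One_nat_def comp_def)
    also have "\<dots> = card {j\<in>{1..2^n}. h j}" by (rule card_sum_filter[symmetric]) simp
    finally have cc: "card {j\<in>{1..2^Suc n}. g j} = 2 * card {j\<in>{1..2^n}. h j}" by simp
    show ?thesis
      using IH[unfolded LW_def]
    proof (elim disjE)
      assume A: "\<forall>j\<in>{1..2^n}. \<not> h j"
      have "\<forall>j\<in>{1..2^Suc n}. \<not> g j"
      proof
        fix j :: nat assume "j \<in> {1..2^Suc n}"
        from allj[OF this] obtain k where k: "k<2^n" and jj: "j = 2*k+1 \<or> j = 2*k+2" by blast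
        have "Suc k \<in> {1..2^n}" using k by simp
        hence "\<not> h (Suc k)" using A by blast
        thus "\<not> g j" using gh1[OF k] jj by blast
      qed
      then show ?thesis unfolding LW_def by (rule disjI1)
    next
      assume A: "\<forall>j\<in>{1..2^n}. h j"
      have "\<forall>j\<in>{1..2^Suc n}. g j"
      proof
        fix j :: nat assume "j \<in> {1..2^Suc n}"
        from allj[OF this] obtain k where k: "k<2^n" and jj: "j = 2*k+1 \<or> j = 2*k+2" by blast
        have "Suc k \<in> {1..2^n}" using k by simp
        hence "h (Suc k)" using A by blast
        thus "g j" using gh1[OF k] jj by blast
      qed
      then show ?thesis unfolding LW_def by (intro disjI2 disjI1)
    next
      assume "2 * card {j\<in>{1..2^n}. h j} = 2^n"
      then show ?thesis unfolding LW_def using cc by (intro disjI2) simp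
    qed
  qed
qed

lemma even4:
  assumes "distinct [a,b,c,d]"
  shows "even (card (X \<inter> {a,b,c,d})) \<longleftrightarrow> (((a\<in>X) = (b\<in>X)) = ((c\<in>X) = (d\<in>X)))"
  using assms
  by (cases "a\<in>X"; cases "b\<in>X"; cases "c\<in>X"; cases "d\<in>X") (auto simp: Int_insert_right)

lemma line_mem:
  assumes a: "(2::nat)^v*(2*k+3) < 2^n"
  shows "int ` {2^v*(2*k+1), 2^v*(2*k+1)+1, 2^v*(2*k+3), 2^v*(2*k+3)+1} \<in> line_checks n"
proof -
  have "\<not> n \<le> v+1"
  proof
    assume "n \<le> v+1"
    then have "(2::nat)^n \<le> 2^(v+1)" by (rule power_increasing) simp
    also have "\<dots> \<le> 2^v*(2*k+3)" by simp
    finally show False using a by simp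
  qed
  define r where "r = n - (v+2)"
  have n: "n = v+2+r" using \<open>\<not> n \<le> v+1\<close> unfolding r_def by simp
  define A where "A = (2::int)^v"
  define B where "B = (2::int)^r"
  have Apos: "A > 0" and Bpos: "B > 0" by (simp_all add: A_def B_def)
  have L: "(2::int)^n = 4*A*B" by (simp add: n power_add A_def B_def)
  have W: "(2::int)^(v+1) = 2*A" by (simp add: A_def)
  have "(2::nat)^v*(2*k+3) < 2^v*(4*2^r)" using a by (simp add: n power_add mult.assoc)
  then have "2*k+3 < 4*(2::nat)^r" by simp
  then have "int (2*k+3) < int (4*2^r)" by (subst of_nat_less_iff)
  then have kb: "2*int k+3 < 4*B" by (simp add: B_def)
  define t where "t = int k + 1 - B"
  have d1: "4*A*B div 2 = 2*A*B" by simp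
  have d2: "2*A div 2 = A" by simp
  have d3: "4*A*B div (2*(2*A)) = B" using Apos by simp
  have e1: "int (2^v*(2*k+1)) = A*(2*int k+1)" by (simp add: A_def algebra_simps)
  have e3: "int (2^v*(2*k+3)) = A*(2*int k+3)" by (simp add: A_def algebra_simps)
  have S: "int ` {2^v*(2*k+1), 2^v*(2*k+1)+1, 2^v*(2*k+3), 2^v*(2*k+3)+1}
      = {2*A*B - A + 2*A*t, 2*A*B - A + 2*A*t + 1, 2*A*B + A + 2*A*t, 2*A*B + A + 2*A*t + 1}"
  proof -
    have "2*A*B - A + 2*A*t = A*(2*int k+1)" by (simp add: t_def algebra_simps)
    moreover have "2*A*B + A + 2*A*t = A*(2*int k+3)" by (simp add: t_def algebra_simps)
    ultimately show ?thesis using e1 e3 by (simp add: ac_simps)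
  qed
  show ?thesis
    unfolding line_checks_def mem_Collect_eq
  proof (intro exI conjI)
    show "int ` {2^v*(2*k+1), 2^v*(2*k+1)+1, 2^v*(2*k+3), 2^v*(2*k+3)+1} =
      (let L = (2::int)^n; w = (2::int)^(v+1) in
        {L div 2 - w div 2 + w*t, L div 2 - w div 2 + w*t + 1,
         L div 2 + w div 2 + w*t, L div 2 + w div 2 + w*t + 1})"
      unfolding Let_def L W d1 d2 S by simp
    show "1 \<le> v+1" by simp
    show "v+1 \<le> n - 1" using n by simp
    show "- ((2::int)^n div (2 * 2^(v+1))) + 1 \<le> t" unfolding L W d3 t_def by simp
    show "t \<le> (2::int)^n div (2 * 2^(v+1)) - 1" unfolding L W d3 t_def using kb by simp
  qed
qed

lemma nat_one_plus: "nat (1 + int n) = Suc n"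
  by arith

lemma line_QQ:
  assumes inj: "inj e" and ch: "\<forall>S\<in>line_checks n. even (card (X \<inter> (\<lambda>j. e (nat j)) ` S))"
  shows "QQ n (\<lambda>j. e j \<in> X)"
  unfolding QQ_def
proof (intro allI impI)
  fix v k assume a: "(2::nat)^v*(2*k+3) < 2^n"
  define p where "p = (2::nat)^v*(2*k+1)"
  define q where "q = (2::nat)^v*(2*k+3)"
  have qp: "q = p + 2*2^v" unfolding p_def q_def by (simp add: algebra_simps)
  have "(0::nat) < 2^v" by simp
  then have pq: "p + 1 < q" using qp by linarith
  have "even (card (X \<inter> (\<lambda>j. e (nat j)) ` int ` {p, p+1, q, q+1}))"
    using ch line_mem[OF a] unfolding p_def q_def by blast
  moreover have "(\<lambda>j. e (nat j)) ` int ` {p, p+1, q, q+1} = {e p, e (p+1), e q, e (q+1)}"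
    by (simp add: nat_one_plus)
  moreover have "distinct [e p, e (p+1), e q, e (q+1)]"
    using pq by (simp add: inj_eq[OF inj])
  ultimately have "((e p\<in>X) = (e (p+1)\<in>X)) = ((e q\<in>X) = (e (q+1)\<in>X))"
    using even4 by metis
  then show "dd (\<lambda>j. e j \<in> X) (2^v*(2*k+1)) = dd (\<lambda>j. e j \<in> X) (2^v*(2*k+3))"
    unfolding dd_def p_def[symmetric] q_def[symmetric] by simp
qed

lemma decomp:
  fixes x :: "nat \<Rightarrow> nat \<Rightarrow> bool"
  assumes bulk: "\<And>i j. 1\<le>i \<Longrightarrow> i<R \<Longrightarrow> 1\<le>j \<Longrightarrow> j<C \<Longrightarrow>
     (x i j = x (Suc i) j) = (x i (Suc j) = x (Suc i) (Suc j))"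
  shows "1\<le>i \<Longrightarrow> i\<le>R \<Longrightarrow> 1\<le>j \<Longrightarrow> j\<le>C \<Longrightarrow> x i j = (x i 1 \<noteq> (x 1 j \<noteq> x 1 1))"
proof -
  have main: "\<forall>j'. Suc j' \<le> C \<longrightarrow> x (Suc i') (Suc j') = (x (Suc i') 1 \<noteq> (x 1 (Suc j') \<noteq> x 1 1))"
    if "Suc i' \<le> R" for i'
    using that
  proof (induction i')
    case 0
    show ?case by (intro allI impI) (simp only: One_nat_def, argo)
  next
    case (Suc i')
    have "Suc i' \<le> R" using Suc.prems by simp
    then have IH: "\<forall>j'. Suc j' \<le> C \<longrightarrow> x (Suc i') (Suc j') = (x (Suc i') 1 \<noteq> (x 1 (Suc j') \<noteq> x 1 1))"
      by (rule Suc.IH)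
    have iR: "Suc (Suc i') \<le> R" using Suc.prems .
    show ?case
    proof (intro allI impI)
      fix j' assume "Suc j' \<le> C"
      then show "x (Suc (Suc i')) (Suc j') = (x (Suc (Suc i')) 1 \<noteq> (x 1 (Suc j') \<noteq> x 1 1))"
      proof (induction j')
        case 0
        show ?case by (simp only: One_nat_def, argo)
      next
        case (Suc j')
        have jC: "Suc j' \<le> C" using Suc.prems by simp
        have h1: "x (Suc (Suc i')) (Suc j') = (x (Suc (Suc i')) 1 \<noteq> (x 1 (Suc j') \<noteq> x 1 1))"
          using jC by (rule Suc.IH)
        have h2: "x (Suc i') (Suc j') = (x (Suc i') 1 \<noteq> (x 1 (Suc j') \<noteq> x 1 1))"
          by (rule IH[rule_format, OF jC])
        have h3: "x (Suc i') (Suc (Suc j')) = (x (Suc i') 1 \<noteq> (x 1 (Suc (Suc j')) \<noteq> x 1 1))"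
          by (rule IH[rule_format, OF Suc.prems])
        have b: "(x (Suc i') (Suc j') = x (Suc (Suc i')) (Suc j')) = (x (Suc i') (Suc (Suc j')) = x (Suc (Suc i')) (Suc (Suc j')))"
          by (rule bulk) (use iR Suc.prems in simp_all)
        show ?case using h1 h2 h3 b by argo
      qed
    qed
  qed
  assume "1\<le>i" "i\<le>R" "1\<le>j" "j\<le>C"
  then have ii: "i = Suc (i-1)" and jj: "j = Suc (j-1)" by simp_all
  have "Suc (i-1) \<le> R" "Suc (j-1) \<le> C" using \<open>i\<le>R\<close> \<open>j\<le>C\<close> ii jj by simp_all
  from main[OF this(1), rule_format, OF this(2)] show ?thesis using ii jj by simp
qed

lemma bal:
  assumes "finite A" "2 * card {j\<in>A. P j} = card A"
  shows "2 * card {j\<in>A. P j \<noteq> c} = card A"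
proof (cases c)
  case False
  then show ?thesis using assms by simp
next
  case True
  have "card {j\<in>A. \<not> P j} + card {j\<in>A. P j} = card A"
  proof -
    have "{j\<in>A. \<not> P j} \<union> {j\<in>A. P j} = A" by blast
    moreover have "{j\<in>A. \<not> P j} \<inter> {j\<in>A. P j} = {}" by blast
    ultimately show ?thesis using assms(1) card_Un_disjoint[of "{j\<in>A. \<not> P j}" "{j\<in>A. P j}"] by simp
  qed
  then show ?thesis using assms True by simp
qed

theorem lemma3:
  fixes m :: nat and bq :: "nat \<Rightarrow> nat \<times> nat" and i :: nat and X :: "(nat \<times> nat) set"
  assumes "m \<ge> 2"
    and "is_base m bq"
    and "i \<le> m"
    and "X \<in> uRM m"
    and "bq i \<in> X"
    and "\<forall>j \<le> m. j \<noteq> i \<longrightarrow> bq j \<notin> X"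
  shows "card X = 2 ^ (m - 1)"
proof -
  define R where "R = (2::nat)^rowexp m"
  define C where "C = (2::nat)^colexp m"
  have "rowexp m + colexp m = m" unfolding rowexp_def colexp_def by presburger
  then have RC: "R*C = 2^m" unfolding R_def C_def by (metis power_add)
  have Xg: "X \<subseteq> grid m" and ev: "\<forall>Q\<in>checks m. even (card (X \<inter> Q))"
    using assms(4) unfolding uRM_def by blast+
  have grid: "grid m = {1..R} \<times> {1..C}" unfolding grid_def R_def C_def ..
  define x where "x a b = ((a,b) \<in> X)" for a b
  have bulk: "(x a b = x (Suc a) b) = (x a (Suc b) = x (Suc a) (Suc b))"
    if "1\<le>a" "a<R" "1\<le>b" "b<C" for a b
  proof -
    have "{(a,b),(a+1,b),(a,b+1),(a+1,b+1)} \<in> bulk_checks m"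
      unfolding bulk_checks_def using that unfolding R_def C_def by blast
    then have "{(a,b),(a+1,b),(a,b+1),(a+1,b+1)} \<in> checks m" unfolding checks_def by blast
    then have e: "even (card (X \<inter> {(a,b),(a+1,b),(a,b+1),(a+1,b+1)}))" using ev by (rule bspec[rotated])
    have d: "distinct [(a,b),(a+1,b),(a,b+1),(a+1,b+1)]" by simp
    have "(((a,b)\<in>X) = ((a+1,b)\<in>X)) = (((a,b+1)\<in>X) = ((a+1,b+1)\<in>X))"
      using e by (rule iffD1[OF even4[OF d]])
    then show ?thesis unfolding x_def by simp
  qed
  have dec: "x a b = (x a 1 \<noteq> (x 1 b \<noteq> x 1 1))" if "a \<in> {1..R}" "b \<in> {1..C}" for a b
    by (rule decomp[where R=R and C=C and x=x, OF bulk]) (use that in simp_all)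
  have QR: "QQ (colexp m) (\<lambda>j. (\<lambda>j. (1::nat, j)) j \<in> X)"
  proof (rule line_QQ)
    show "inj (\<lambda>j. (1::nat, j))" by (simp add: inj_def)
    show "\<forall>S\<in>line_checks (colexp m). even (card (X \<inter> (\<lambda>j. (\<lambda>j. (1::nat, j)) (nat j)) ` S))"
    proof
      fix S assume "S \<in> line_checks (colexp m)"
      then have "(\<lambda>j. (1::nat, nat j)) ` S \<in> checks m" unfolding checks_def by blast
      then show "even (card (X \<inter> (\<lambda>j. (\<lambda>j. (1::nat, j)) (nat j)) ` S))" using ev by simp
    qed
  qed
  have QC: "QQ (rowexp m) (\<lambda>j. (\<lambda>j. (j, 1::nat)) j \<in> X)"
  proof (rule line_QQ)
    show "inj (\<lambda>j. (j, 1::nat))" by (simp add: inj_def)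
    show "\<forall>S\<in>line_checks (rowexp m). even (card (X \<inter> (\<lambda>j. (\<lambda>j. (j, 1::nat)) (nat j)) ` S))"
    proof
      fix S assume "S \<in> line_checks (rowexp m)"
      then have "(\<lambda>j. (nat j, 1::nat)) ` S \<in> checks m" unfolding checks_def by blast
      then show "even (card (X \<inter> (\<lambda>j. (\<lambda>j. (j, 1::nat)) (nat j)) ` S))" using ev by simp
    qed
  qed
  have LR: "(\<forall>a\<in>{1..R}. \<not> x a 1) \<or> (\<forall>a\<in>{1..R}. x a 1) \<or> 2 * card {a\<in>{1..R}. x a 1} = R"
    using line_lemma[OF QC] unfolding LW_def R_def x_def by simp
  have LC: "(\<forall>b\<in>{1..C}. \<not> x 1 b) \<or> (\<forall>b\<in>{1..C}. x 1 b) \<or> 2 * card {b\<in>{1..C}. x 1 b} = C"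
    using line_lemma[OF QR] unfolding LW_def C_def x_def by simp
  have cardX: "card X = (\<Sum>a\<in>{1..R}. \<Sum>b\<in>{1..C}. of_bool (x a b))"
  proof -
    have "X = {p\<in>grid m. p\<in>X}" using Xg by blast
    then have "card X = (\<Sum>p\<in>grid m. of_bool (p\<in>X))"
      using card_sum_filter[of "grid m" "\<lambda>p. p\<in>X"] by (simp add: grid)
    also have "\<dots> = (\<Sum>a\<in>{1..R}. \<Sum>b\<in>{1..C}. of_bool ((a,b)\<in>X))"
      unfolding grid by (rule sum.cartesian_product')
    finally show ?thesis unfolding x_def .
  qed
  have R1: "1 \<in> {1..R}" unfolding R_def by simp
  have C1: "1 \<in> {1..C}" unfolding C_def by simp
  have m1: "2 * 2^(m-1) = (2::nat)^m" using assms(1)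
    by (metis One_nat_def Suc_diff_le le_trans one_le_numeral power_Suc diff_Suc_Suc diff_zero)
  have "2 * card X = R * C \<or> (\<forall>a\<in>{1..R}. \<forall>b\<in>{1..C}. x a b = x 1 1)"
  proof -
    consider (r) "2 * card {a\<in>{1..R}. x a 1} = R" | (c) "2 * card {b\<in>{1..C}. x 1 b} = C"
      | (const) "\<forall>a\<in>{1..R}. x a 1 = x 1 1" "\<forall>b\<in>{1..C}. x 1 b = x 1 1"
      using LR LC R1 C1 by blast
    then show ?thesis
    proof cases
      case r
      have "card X = (\<Sum>b\<in>{1..C}. \<Sum>a\<in>{1..R}. of_bool (x a b))"
        unfolding cardX by (rule sum.swap)
      also have "\<dots> = (\<Sum>b\<in>{1..C}. card {a\<in>{1..R}. x a 1 \<noteq> (x 1 b \<noteq> x 1 1)})"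
      proof (rule sum.cong[OF refl])
        fix b assume b: "b \<in> {1..C}"
        have "(\<Sum>a\<in>{1..R}. of_bool (x a b)) = (\<Sum>a\<in>{1..R}. of_bool (x a 1 \<noteq> (x 1 b \<noteq> x 1 1)))"
          by (rule sum.cong[OF refl]) (simp only: dec[OF _ b])
        also have "\<dots> = card {a\<in>{1..R}. x a 1 \<noteq> (x 1 b \<noteq> x 1 1)}"
          by (rule card_sum_filter[symmetric]) simp
        finally show "(\<Sum>a\<in>{1..R}. of_bool (x a b)) = card {a\<in>{1..R}. x a 1 \<noteq> (x 1 b \<noteq> x 1 1)}" .
      qed
      finally have "2 * card X = (\<Sum>b\<in>{1..C}. 2 * card {a\<in>{1..R}. x a 1 \<noteq> (x 1 b \<noteq> x 1 1)})"
        by (simp add: sum_distrib_left)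
      also have "\<dots> = (\<Sum>b\<in>{1..C}. R)"
      proof (rule sum.cong[OF refl])
        fix b
        have "2 * card {a\<in>{1..R}. x a 1 \<noteq> (x 1 b \<noteq> x 1 1)} = card {1..R}"
          by (rule bal) (use r in simp_all)
        then show "2 * card {a\<in>{1..R}. x a 1 \<noteq> (x 1 b \<noteq> x 1 1)} = R" by simp
      qed
      also have "\<dots> = R * C" by simp
      finally show ?thesis by blast
    next
      case c
      have "card X = (\<Sum>a\<in>{1..R}. card {b\<in>{1..C}. x 1 b \<noteq> (x a 1 \<noteq> x 1 1)})"
        unfolding cardX
      proof (rule sum.cong[OF refl])
        fix a assume a: "a \<in> {1..R}"
        have "(\<Sum>b\<in>{1..C}. of_bool (x a b)) = (\<Sum>b\<in>{1..C}. of_bool (x 1 b \<noteq> (x a 1 \<noteq> x 1 1)) :: nat)"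
        proof (rule sum.cong[OF refl])
          fix b assume "b \<in> {1..C}"
          from dec[OF a this] have "x a b = (x 1 b \<noteq> (x a 1 \<noteq> x 1 1))" by argo
          then show "of_bool (x a b) = (of_bool (x 1 b \<noteq> (x a 1 \<noteq> x 1 1)) :: nat)" by (simp only:)
        qed
        also have "\<dots> = card {b\<in>{1..C}. x 1 b \<noteq> (x a 1 \<noteq> x 1 1)}"
          by (rule card_sum_filter[symmetric]) simp
        finally show "(\<Sum>b\<in>{1..C}. of_bool (x a b)) = card {b\<in>{1..C}. x 1 b \<noteq> (x a 1 \<noteq> x 1 1)}" .
      qed
      then have "2 * card X = (\<Sum>a\<in>{1..R}. 2 * card {b\<in>{1..C}. x 1 b \<noteq> (x a 1 \<noteq> x 1 1)})"
        by (simp add: sum_distrib_left)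
      also have "\<dots> = (\<Sum>a\<in>{1..R}. C)"
      proof (rule sum.cong[OF refl])
        fix a
        have "2 * card {b\<in>{1..C}. x 1 b \<noteq> (x a 1 \<noteq> x 1 1)} = card {1..C}"
          by (rule bal) (use c in simp_all)
        then show "2 * card {b\<in>{1..C}. x 1 b \<noteq> (x a 1 \<noteq> x 1 1)} = C" by simp
      qed
      also have "\<dots> = R * C" by simp
      finally show ?thesis by blast
    next
      case const
      have "\<forall>a\<in>{1..R}. \<forall>b\<in>{1..C}. x a b = x 1 1"
      proof (intro ballI)
        fix a b assume a: "a \<in> {1..R}" and b: "b \<in> {1..C}"
        have "x a 1 = x 1 1" using const(1) a by blast
        moreover have "x 1 b = x 1 1" using const(2) b by blast
        moreover have "x a b = (x a 1 \<noteq> (x 1 b \<noteq> x 1 1))" by (rule dec[OF a b])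
        ultimately show "x a b = x 1 1" by argo
      qed
      then show ?thesis by blast
    qed
  qed
  then show ?thesis
  proof
    assume "2 * card X = R * C"
    then show ?thesis using RC m1 by simp
  next
    assume allc: "\<forall>a\<in>{1..R}. \<forall>b\<in>{1..C}. x a b = x 1 1"
    obtain a b where ab: "bq i = (a,b)" by (cases "bq i")
    have abg: "a \<in> {1..R}" "b \<in> {1..C}" using ab assms(5) Xg grid by auto
    have "x a b" unfolding x_def using ab assms(5) by simp
    then have T: "x 1 1" using allc abg by blast
    define j0 where "j0 = (if i = 0 then 1 else (0::nat))"
    have j0: "j0 \<le> m" "j0 \<noteq> i" unfolding j0_def using assms(1) by auto
    have bij: "bij_betw (\<lambda>Y. restrict (\<lambda>k. bq k \<in> Y) {0..m}) (uRM m) ({0..m} \<rightarrow>\<^sub>E (UNIV :: bool set))"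
      using assms(2) unfolding is_base_def .
    have "restrict (\<lambda>k. True) {0..m} \<in> {0..m} \<rightarrow>\<^sub>E (UNIV :: bool set)" by simp
    then have "restrict (\<lambda>k. True) {0..m} \<in> (\<lambda>Y. restrict (\<lambda>k. bq k \<in> Y) {0..m}) ` uRM m"
      using bij_betw_imp_surj_on[OF bij] by simp
    then obtain Y where Y: "Y \<in> uRM m" "restrict (\<lambda>k. True) {0..m} = restrict (\<lambda>k. bq k \<in> Y) {0..m}"
      by blast
    have "restrict (\<lambda>k. True) {0..m} j0 = restrict (\<lambda>k. bq k \<in> Y) {0..m} j0" using Y(2) by simp
    then have "bq j0 \<in> Y" using j0 by simp
    then have "bq j0 \<in> grid m" using Y(1) unfolding uRM_def by blast
    then obtain a' b' where ab': "bq j0 = (a',b')" "a' \<in> {1..R}" "b' \<in> {1..C}" using grid by (cases "bq j0") auto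
    then have "x a' b'" using allc T by blast
    then have "bq j0 \<in> X" using ab' unfolding x_def by simp
    moreover have "bq j0 \<notin> X" using assms(6) j0 by blast
    ultimately show ?thesis by contradiction
  qed
qed

end
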